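(* Let $A$ be a real symmetric matrix, normalized so that the minimal entry of every row and every column is $0$, and suppose $A$ has symmetric tropical rank two. Then after possibly a diagonal permutation, $A$ has the block structure $$\begin{pmatrix}\mathbf 0&\mathbf 0&\mathbf 0&\mathbf 0&\mathbf 0\\ \mathbf 0&B_1&\mathbf 0&\mathbf 0&\mathbf 0\\ \mathbf 0&\mathbf 0&B_2&\mathbf 0&\mathbf 0\\ \mathbf 0&\mathbf 0&\mathbf 0&\mathbf 0&C\\ \mathbf 0&\mathbf 0&\mathbf 0&C^{T}&\mathbf 0\end{pmatrix},$$ where $B_1,B_2$ are symmetric with all entries positive, $C$ has all entries nonnegative and no column consisting entirely of zeros, and each $\mathbf 0$ is a zero matrix of appropriate size; any of the blocks (the initial block of all-zero rows/columns, $B_1$, $B_2$, $C$) may have size zero. Moreover, $A$ is neither the zero matrix nor a matrix consisting of just one of the positive blocks $B_1$ or $B_2$.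
   Context: A diagonal permutation of a square matrix permutes its rows and its columns by the same permutation. For an $r\times r$ submatrix of a real symmetric matrix $A$ with row index set $I$ and column index set $J$, each bijection $\rho:I\to J$ gives a monomial $\prod_{i\in I}X_{i,\rho(i)}$ in commuting variables subject to $X_{i,j}=X_{j,i}$, with value $\sum_{i\in I}A_{i,\rho(i)}$; the submatrix is symmetrically tropically singular if the minimum value is attained by at least two distinct monomials. The symmetric tropical rank of $A$ is the largest $r$ such that $A$ has an $r\times r$ submatrix that is not symmetrically tropically singular. *)

theory Defs
  imports Complex_Main "HOL-Library.FuncSet" "HOL-Library.Multiset"
begin

text \<open>Matrices are functions nat => nat => real, with an explicit dimension n
  (indices 0..n-1).\<close>

definition bijs :: "nat set \<Rightarrow> nat set \<Rightarrow> (nat \<Rightarrow> nat) set" where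
  "bijs I J = {\<rho> \<in> I \<rightarrow>\<^sub>E J. bij_betw \<rho> I J}"

text \<open>The monomial prod_{i in I} X_{i,rho(i)} in commuting variables with
  X_{i,j} = X_{j,i}: the variable X_{i,j} is indexed by the unordered pair {i,j},
  and a monomial is the multiset of its variables.\<close>
definition monomial :: "nat set \<Rightarrow> (nat \<Rightarrow> nat) \<Rightarrow> nat set multiset" where
  "monomial I \<rho> = image_mset (\<lambda>i. {i, \<rho> i}) (mset_set I)"

definition mon_value :: "(nat \<Rightarrow> nat \<Rightarrow> real) \<Rightarrow> nat set \<Rightarrow> (nat \<Rightarrow> nat) \<Rightarrow> real" where
  "mon_value A I \<rho> = (\<Sum>i\<in>I. A i (\<rho> i))"

definition sym_trop_singular :: "(nat \<Rightarrow> nat \<Rightarrow> real) \<Rightarrow> nat set \<Rightarrow> nat set \<Rightarrow> bool" where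
  "sym_trop_singular A I J \<longleftrightarrow>
     (\<exists>\<rho>1\<in>bijs I J. \<exists>\<rho>2\<in>bijs I J.
        (\<forall>\<tau>\<in>bijs I J. mon_value A I \<rho>1 \<le> mon_value A I \<tau>) \<and>
        (\<forall>\<tau>\<in>bijs I J. mon_value A I \<rho>2 \<le> mon_value A I \<tau>) \<and>
        monomial I \<rho>1 \<noteq> monomial I \<rho>2)"

definition sym_trop_rank :: "nat \<Rightarrow> (nat \<Rightarrow> nat \<Rightarrow> real) \<Rightarrow> nat" where
  "sym_trop_rank n A = (GREATEST r. \<exists>I J. I \<subseteq> {..<n} \<and> J \<subseteq> {..<n} \<and>
      card I = r \<and> card J = r \<and> \<not> sym_trop_singular A I J)"

text \<open>Block index of position i for block sizes k0 (zero block), k1 (B1), k2 (B2),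
  k3 (rows of C), and the rest (columns of C).\<close>
definition blk :: "nat \<Rightarrow> nat \<Rightarrow> nat \<Rightarrow> nat \<Rightarrow> nat \<Rightarrow> nat" where
  "blk k0 k1 k2 k3 i =
     (if i < k0 then 0 else if i < k0 + k1 then 1 else if i < k0 + k1 + k2 then 2
      else if i < k0 + k1 + k2 + k3 then 3 else 4)"

definition sym_block_form ::
  "nat \<Rightarrow> (nat \<Rightarrow> nat \<Rightarrow> real) \<Rightarrow> nat \<Rightarrow> nat \<Rightarrow> nat \<Rightarrow> nat \<Rightarrow> nat \<Rightarrow> bool" where
  "sym_block_form n B k0 k1 k2 k3 k4 \<longleftrightarrow>
     k0 + k1 + k2 + k3 + k4 = n \<and>
     (\<forall>i<n. \<forall>j<n.
        (let bi = blk k0 k1 k2 k3 i; bj = blk k0 k1 k2 k3 j in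
          if (bi = 1 \<and> bj = 1) \<or> (bi = 2 \<and> bj = 2) then B i j > 0
          else if bi = 3 \<and> bj = 4 then B i j \<ge> 0 \<and> B j i = B i j
          else if bi = 4 \<and> bj = 3 then B i j \<ge> 0
          else B i j = 0)) \<and>
     (\<forall>j. k0 + k1 + k2 + k3 \<le> j \<and> j < n \<longrightarrow>
        (\<exists>i. k0 + k1 + k2 \<le> i \<and> i < k0 + k1 + k2 + k3 \<and> B i j \<noteq> 0))"

end

theory Submission
  imports Defs
begin

lemma nonsing:
  fixes A :: "nat \<Rightarrow> nat \<Rightarrow> real"
  assumes fin: "finite I" and nn: "\<forall>i\<in>I. \<forall>j\<in>J. A i j \<ge> 0"
    and r: "\<rho> \<in> bijs I J" and rz: "\<forall>i\<in>I. A i (\<rho> i) = 0"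
    and uniq: "\<forall>\<tau>\<in>bijs I J. (\<forall>i\<in>I. A i (\<tau> i) = 0) \<longrightarrow> monomial I \<tau> = monomial I \<rho>"
  shows "\<not> sym_trop_singular A I J"
proof
  assume "sym_trop_singular A I J"
  then obtain r1 r2 where r1: "r1 \<in> bijs I J" and r2: "r2 \<in> bijs I J"
    and m1: "\<forall>\<tau>\<in>bijs I J. mon_value A I r1 \<le> mon_value A I \<tau>"
    and m2: "\<forall>\<tau>\<in>bijs I J. mon_value A I r2 \<le> mon_value A I \<tau>"
    and ne: "monomial I r1 \<noteq> monomial I r2" unfolding sym_trop_singular_def by blast
  have v0: "mon_value A I \<rho> = 0" using rz by (simp add: mon_value_def)
  have zero: "\<forall>i\<in>I. A i (\<tau> i) = 0" if "\<tau> \<in> bijs I J" "mon_value A I \<tau> \<le> 0" for \<tau>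
  proof -
    have nnt: "\<forall>i\<in>I. A i (\<tau> i) \<ge> 0" using that(1) nn unfolding bijs_def by (auto simp: PiE_def Pi_def)
    hence "mon_value A I \<tau> \<ge> 0" by (simp add: mon_value_def sum_nonneg)
    hence "(\<Sum>i\<in>I. A i (\<tau> i)) = 0" using that(2) by (simp add: mon_value_def)
    thus ?thesis using sum_nonneg_eq_0_iff[OF fin, of "\<lambda>i. A i (\<tau> i)"] nnt by simp
  qed
  have "mon_value A I r1 \<le> mon_value A I \<rho>" using m1 r by blast
  hence "mon_value A I r1 \<le> 0" using v0 by simp
  hence "\<forall>i\<in>I. A i (r1 i) = 0" using zero[OF r1] by simp
  hence "monomial I r1 = monomial I \<rho>" using uniq r1 by simp
  moreover have "mon_value A I r2 \<le> mon_value A I \<rho>" using m2 r by blast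
  hence "mon_value A I r2 \<le> 0" using v0 by simp
  hence "\<forall>i\<in>I. A i (r2 i) = 0" using zero[OF r2] by simp
  hence "monomial I r2 = monomial I \<rho>" using uniq r2 by simp
  ultimately show False using ne by simp
qed

lemma bij3:
  assumes "distinct [a,b,c]" "distinct [d,e,g]"
  shows "(\<lambda>x. if x = a then d else if x = b then e else if x = c then g else undefined) \<in> bijs {a,b,c} {d,e,g}"
  using assms unfolding bijs_def bij_betw_def inj_on_def by (auto split: if_splits)

lemma bijs3_facts:
  assumes "\<tau> \<in> bijs {a,b,c} J"
  shows "\<tau> a \<in> J" "\<tau> b \<in> J" "\<tau> c \<in> J" "inj_on \<tau> {a,b,c}" "\<And>x. x \<notin> {a,b,c} \<Longrightarrow> \<tau> x = undefined"
  using assms unfolding bijs_def bij_betw_def by (auto simp: PiE_def extensional_def)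

lemma mono3:
  assumes "distinct [a,b,c]"
  shows "monomial {a,b,c} \<tau> = {#{a, \<tau> a}, {b, \<tau> b}, {c, \<tau> c}#}"
  using assms by (simp add: monomial_def)

lemma rank_ge3:
  assumes "I \<subseteq> {..<n}" "J \<subseteq> {..<n}" "card I = 3" "card J = 3" "\<not> sym_trop_singular A I J"
  shows "sym_trop_rank n A \<ge> 3"
proof -
  let ?P = "\<lambda>r. \<exists>I J. I \<subseteq> {..<n} \<and> J \<subseteq> {..<n} \<and> card I = r \<and> card J = r \<and> \<not> sym_trop_singular A I J"
  have "?P 3" using assms by blast
  moreover have "\<forall>y. ?P y \<longrightarrow> y \<le> n"
    by (metis card_lessThan card_mono finite_lessThan)
  ultimately have "3 \<le> Greatest ?P" using Greatest_le_nat[of ?P 3 n] by blast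
  thus ?thesis unfolding sym_trop_rank_def .
qed


lemma minxor:
  fixes X Y :: "nat set"
  assumes "finite X" "finite Y" "X \<inter> Y = {}" "X \<union> Y \<noteq> {}"
  shows "(\<exists>c\<in>X. \<forall>y\<in>Y. c < y) \<longleftrightarrow> \<not> (\<exists>c\<in>Y. \<forall>y\<in>X. c < y)"
proof
  assume "\<exists>c\<in>X. \<forall>y\<in>Y. c < y"
  thus "\<not> (\<exists>c\<in>Y. \<forall>y\<in>X. c < y)" by force
next
  assume H: "\<not> (\<exists>c\<in>Y. \<forall>y\<in>X. c < y)"
  define m where "m = Min (X \<union> Y)"
  have mem: "m \<in> X \<union> Y" unfolding m_def using assms by (intro Min_in) auto
  have le: "\<And>z. z \<in> X \<union> Y \<Longrightarrow> m \<le> z" unfolding m_def using assms by (intro Min_le) auto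
  show "\<exists>c\<in>X. \<forall>y\<in>Y. c < y"
  proof (cases "m \<in> X")
    case True
    have "\<forall>y\<in>Y. m < y" using le True assms(3) by (metis IntI UnI2 empty_iff order_le_imp_less_or_eq)
    thus ?thesis using True by blast
  next
    case False
    hence "m \<in> Y" using mem by blast
    moreover have "\<forall>y\<in>X. m < y" using le False by (metis UnI1 order_le_imp_less_or_eq)
    ultimately show ?thesis using H by blast
  qed
qed

definition Q3 :: "nat \<Rightarrow> (nat \<Rightarrow> nat \<Rightarrow> real) \<Rightarrow> nat \<Rightarrow> bool" where
  "Q3 n A a \<longleftrightarrow> (\<exists>c<n. (\<exists>b<n. A a b > 0 \<and> A b c > 0) \<and> (\<forall>b'<n. A a b' > 0 \<longrightarrow> c < b'))"

definition fpart :: "nat \<Rightarrow> (nat \<Rightarrow> nat \<Rightarrow> real) \<Rightarrow> nat \<Rightarrow> nat \<Rightarrow> nat" where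
  "fpart n A p0 x = (if (\<forall>j<n. A x j = 0) then 0 else if A x x > 0 then (if A x p0 > 0 then 1 else 2)
     else if Q3 n A x then 3 else 4)"

lemma combo:
  fixes p q :: nat
  assumes "p \<in> {0,1,2,3,4}" "q \<in> {0,1,2,3,4}" "\<not> ((p = 1 \<and> q = 1) \<or> (p = 2 \<and> q = 2))"
    "\<not> (p = 3 \<and> q = 4)" "\<not> (p = 4 \<and> q = 3)"
  shows "p = 0 \<or> q = 0 \<or> ((p = 1 \<or> p = 2) \<and> (q = 3 \<or> q = 4))
          \<or> ((q = 1 \<or> q = 2) \<and> (p = 3 \<or> p = 4)) \<or> (p = 1 \<and> q = 2) \<or> (p = 2 \<and> q = 1)
          \<or> (p = q \<and> (p = 3 \<or> p = 4))"
  using assms by auto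

locale R2 =
  fixes n :: nat and A :: "nat \<Rightarrow> nat \<Rightarrow> real"
  assumes symm: "\<And>i j. i<n \<Longrightarrow> j<n \<Longrightarrow> A i j = A j i"
  and nn: "\<And>i j. i<n \<Longrightarrow> j<n \<Longrightarrow> A i j \<ge> 0"
  and rowz: "\<And>i. i<n \<Longrightarrow> \<exists>j<n. A i j = 0"
  and sing3: "\<And>I J. I \<subseteq> {..<n} \<Longrightarrow> J \<subseteq> {..<n} \<Longrightarrow> card I = 3 \<Longrightarrow> card J = 3 \<Longrightarrow> sym_trop_singular A I J"
begin

lemma uniq3:
  assumes lt: "a<n" "b<n" "c<n" "d<n" "e<n" "g<n"
  and dI: "distinct [a,b,c]" and dJ: "distinct [d,e,g]"
  and z: "A a d = 0" "A b e = 0" "A c g = 0"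
  and H: "\<And>x y z. x \<in> {d,e,g} \<Longrightarrow> y \<in> {d,e,g} \<Longrightarrow> z \<in> {d,e,g} \<Longrightarrow> distinct [x,y,z] \<Longrightarrow>
     A a x = 0 \<Longrightarrow> A b y = 0 \<Longrightarrow> A c z = 0 \<Longrightarrow> x = d \<and> y = e \<and> z = g"
  shows False
proof -
  let ?r = "\<lambda>x. if x = a then d else if x = b then e else if x = c then g else undefined"
  have r: "?r \<in> bijs {a,b,c} {d,e,g}" by (rule bij3[OF dI dJ])
  have "\<not> sym_trop_singular A {a,b,c} {d,e,g}"
  proof (rule nonsing[OF _ _ r])
    show "finite {a,b,c}" by simp
    show "\<forall>i\<in>{a,b,c}. \<forall>j\<in>{d,e,g}. A i j \<ge> 0" using lt nn by auto
    show "\<forall>i\<in>{a,b,c}. A i (?r i) = 0" using z dI by auto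
    show "\<forall>\<tau>\<in>bijs {a,b,c} {d,e,g}. (\<forall>i\<in>{a,b,c}. A i (\<tau> i) = 0) \<longrightarrow> monomial {a,b,c} \<tau> = monomial {a,b,c} ?r"
    proof (intro ballI impI)
      fix \<tau> assume t: "\<tau> \<in> bijs {a,b,c} {d,e,g}" and tz: "\<forall>i\<in>{a,b,c}. A i (\<tau> i) = 0"
      note f = bijs3_facts[OF t]
      have "distinct [\<tau> a, \<tau> b, \<tau> c]" using f(4) dI by (auto simp: inj_on_def)
      then have v: "\<tau> a = d \<and> \<tau> b = e \<and> \<tau> c = g"
        using tz f(1-3) by (intro H) auto
      have "\<tau> = ?r"
      proof
        fix x show "\<tau> x = ?r x" using v f(5)[of x] by (cases "x \<in> {a,b,c}") auto
      qed
      thus "monomial {a,b,c} \<tau> = monomial {a,b,c} ?r" by simp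
    qed
  qed
  moreover have "sym_trop_singular A {a,b,c} {d,e,g}"
    using lt dI dJ by (intro sing3) auto
  ultimately show False by simp
qed

lemma F1:
  assumes i: "i<n" and k: "k<n" and pi: "A i i > 0" and qk: "A k k = 0"
  shows "A i k = 0"
proof (rule ccontr)
  assume "A i k \<noteq> 0"
  then have pos: "A i k > 0" using nn[OF i k] by simp
  obtain j where j: "j<n" "A i j = 0" using rowz[OF i] by blast
  have dji: "A j i = 0" using symm[OF i j(1)] j by simp
  have aki: "A k i > 0" using symm[OF i k] pos by simp
  show False
    apply (rule uniq3[of i k j j k i])
    using i k j pi qk pos dji aki by auto
qed

lemma F2trans:
  assumes i: "i<n" and j: "j<n" and k: "k<n" and pi: "A i i > 0" and pj: "A j j > 0" and pk: "A k k > 0"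
    and ij: "A i j > 0" and jk: "A j k > 0"
  shows "A i k > 0"
proof (rule ccontr)
  assume "\<not> A i k > 0"
  then have ik: "A i k = 0" using nn[OF i k] by simp
  have ki: "A k i = 0" using symm[OF i k] ik by simp
  have ji: "A j i > 0" using symm[OF i j] ij by simp
  obtain l where l: "l<n" "A j l = 0" using rowz[OF j] by blast
  show False
    apply (rule uniq3[of i j k k l i])
    using i j k l pi pj pk ij jk ik ki ji by auto
qed

lemma F2three:
  assumes i: "i<n" and j: "j<n" and k: "k<n" and pi: "A i i > 0" and pj: "A j j > 0" and pk: "A k k > 0"
    and ij: "A i j = 0" and jk: "A j k = 0" and ik: "A i k = 0"
  shows False
proof -
  have d: "distinct [i,j,k]" using pi pj pk ij jk ik by auto
  have ji: "A j i = 0" and kj: "A k j = 0" and ki: "A k i = 0" using symm i j k ij jk ik by auto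
  let ?r = "\<lambda>x. if x = i then j else if x = j then k else if x = k then i else undefined"
  have d2: "distinct [j,k,i]" using d by auto
  have r0: "?r \<in> bijs {i,j,k} {j,k,i}" by (rule bij3[OF d d2])
  have e: "{j,k,i} = {i,j,k}" by auto
  have r: "?r \<in> bijs {i,j,k} {i,j,k}" using r0 e by simp
  have "\<not> sym_trop_singular A {i,j,k} {i,j,k}"
  proof (rule nonsing[OF _ _ r])
    show "finite {i,j,k}" by simp
    show "\<forall>a\<in>{i,j,k}. \<forall>b\<in>{i,j,k}. A a b \<ge> 0" using i j k nn by auto
    show "\<forall>a\<in>{i,j,k}. A a (?r a) = 0" using d ij jk ki by auto
    show "\<forall>\<tau>\<in>bijs {i,j,k} {i,j,k}. (\<forall>a\<in>{i,j,k}. A a (\<tau> a) = 0) \<longrightarrow> monomial {i,j,k} \<tau> = monomial {i,j,k} ?r"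
    proof (intro ballI impI)
      fix \<tau> assume t: "\<tau> \<in> bijs {i,j,k} {i,j,k}" and tz: "\<forall>a\<in>{i,j,k}. A a (\<tau> a) = 0"
      note f = bijs3_facts[OF t]
      have dt: "distinct [\<tau> i, \<tau> j, \<tau> k]" using f(4) d by (auto simp: inj_on_def)
      have "\<tau> i \<noteq> i" "\<tau> j \<noteq> j" "\<tau> k \<noteq> k" using tz pi pj pk by auto
      then have "(\<tau> i = j \<and> \<tau> j = k \<and> \<tau> k = i) \<or> (\<tau> i = k \<and> \<tau> j = i \<and> \<tau> k = j)"
        using dt f(1-3) by auto
      then show "monomial {i,j,k} \<tau> = monomial {i,j,k} ?r"
        using mono3[OF d, of \<tau>] mono3[OF d, of ?r] d
        by (auto simp: insert_commute add_mset_commute)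
    qed
  qed
  moreover have "sym_trop_singular A {i,j,k} {i,j,k}"
    using i j k d by (intro sing3) auto
  ultimately show False by simp
qed


definition isQ :: "nat \<Rightarrow> bool" where
  "isQ x \<longleftrightarrow> x < n \<and> A x x = 0 \<and> (\<exists>j<n. A x j \<noteq> 0)"

lemma Qnb:
  assumes a: "isQ a" and b: "b<n" and ab: "A a b > 0"
  shows "isQ b"
proof -
  have an: "a<n" and aa: "A a a = 0" using a unfolding isQ_def by auto
  have ba: "A b a > 0" using symm[OF an b] ab by simp
  have "\<not> A b b > 0"
  proof
    assume "A b b > 0"
    then have "A b a = 0" using F1[OF b an _ aa] by simp
    thus False using ba by simp
  qed
  hence "A b b = 0" using nn[OF b b] by simp
  thus ?thesis unfolding isQ_def using b an ba by force
qed

lemma tri: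
  assumes a: "a<n" and b: "b<n" and c: "c<n" and aa: "A a a = 0" and bb: "A b b = 0" and cc: "A c c = 0"
    and ab: "A a b > 0" and bc: "A b c > 0" and ac: "A a c > 0"
  shows False
proof -
  have ba: "A b a > 0" and cb: "A c b > 0" and ca: "A c a > 0" using symm a b c ab bc ac by auto
  show False
    apply (rule uniq3[of a b c a b c])
    using a b c aa bb cc ab bc ac ba cb ca by auto
qed

lemma K:
  assumes a: "a<n" and b: "b<n" and c: "c<n" and d: "d<n"
    and aa: "A a a = 0" and bb: "A b b = 0" and cc: "A c c = 0" and dd: "A d d = 0"
    and ab: "A a b > 0" and bc: "A b c > 0" and cd: "A c d > 0"
  shows "A a d > 0"
proof (cases "a = c \<or> b = d \<or> a = d")
  case True
  then show ?thesis
  proof (elim disjE)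
    assume "a = c" thus ?thesis using cd by simp
  next
    assume "b = d" thus ?thesis using ab by simp
  next
    assume ad: "a = d"
    have "A a c > 0" using symm[OF c d] cd ad by simp
    thus ?thesis using tri[OF a b c aa bb cc ab bc] by simp
  qed
next
  case False
  have ac: "A a c = 0" using tri[OF a b c aa bb cc ab bc] nn[OF a c] by force
  have bd: "A b d = 0" using tri[OF b c d bb cc dd bc cd] nn[OF b d] by force
  have ca: "A c a = 0" using symm[OF a c] ac by simp
  have cb: "A c b > 0" using symm[OF b c] bc by simp
  show ?thesis
  proof (rule ccontr)
    assume "\<not> A a d > 0"
    hence ad: "A a d = 0" using nn[OF a d] by simp
    show False
      apply (rule uniq3[of a b c d b a])
      using a b c d False aa bb cc dd ab bc cd ac bd ca cb ad by auto
  qed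
qed

lemma Q3xor:
  assumes a: "isQ a" and b: "b<n" and ab: "A a b > 0"
  shows "Q3 n A a \<longleftrightarrow> \<not> Q3 n A b"
proof -
  have qb: "isQ b" using Qnb[OF a b ab] .
  have an: "a<n" and aa: "A a a = 0" using a unfolding isQ_def by auto
  have bb: "A b b = 0" using qb unfolding isQ_def by auto
  have ba: "A b a > 0" using symm[OF an b] ab by simp
  have S: "(\<exists>b'<n. A x b' > 0 \<and> A b' c > 0) \<longleftrightarrow> A y c > 0"
    if x: "isQ x" and y: "y<n" and xy: "A x y > 0" and c: "c<n" for x y c
  proof
    have xn: "x<n" and xx: "A x x = 0" using x unfolding isQ_def by auto
    have yy: "A y y = 0" using Qnb[OF x y xy] unfolding isQ_def by auto
    have yx: "A y x > 0" using symm[OF xn y] xy by simp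
    assume "\<exists>b'<n. A x b' > 0 \<and> A b' c > 0"
    then obtain b' where b': "b'<n" "A x b' > 0" "A b' c > 0" by blast
    have qb': "isQ b'" using Qnb[OF x b'(1,2)] .
    have b'b': "A b' b' = 0" using qb' unfolding isQ_def by auto
    have cc: "A c c = 0" using Qnb[OF qb' c b'(3)] unfolding isQ_def by auto
    show "A y c > 0" using K[OF y xn b'(1) c yy xx b'b' cc yx b'(2,3)] .
  next
    assume "A y c > 0" thus "\<exists>b'<n. A x b' > 0 \<and> A b' c > 0" using y xy by blast
  qed
  define X where "X = {y. y<n \<and> A b y > 0}"
  define Y where "Y = {y. y<n \<and> A a y > 0}"
  have q3a: "Q3 n A a \<longleftrightarrow> (\<exists>c\<in>X. \<forall>y\<in>Y. c < y)"
    unfolding Q3_def X_def Y_def using S[OF a b ab] by auto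
  have q3b: "Q3 n A b \<longleftrightarrow> (\<exists>c\<in>Y. \<forall>y\<in>X. c < y)"
    unfolding Q3_def X_def Y_def using S[OF qb an ba] by auto
  have disj: "X \<inter> Y = {}"
  proof (rule ccontr)
    assume "X \<inter> Y \<noteq> {}"
    then obtain y where y: "y<n" "A b y > 0" "A a y > 0" unfolding X_def Y_def by blast
    have "A y y = 0" using Qnb[OF a y(1) y(3)] unfolding isQ_def by auto
    thus False using tri[OF an b y(1) aa bb _ ab y(2) y(3)] by simp
  qed
  have ne: "X \<union> Y \<noteq> {}" using b ab unfolding Y_def by blast
  show ?thesis using minxor[of X Y] disj ne q3a q3b unfolding X_def Y_def by auto
qed


lemma blockprop:
  assumes p0: "(\<exists>p<n. A p p > 0) \<longrightarrow> p0 < n \<and> A p0 p0 > 0"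
    and x: "x<n" and y: "y<n"
  shows "let bi = fpart n A p0 x; bj = fpart n A p0 y in
          if (bi = 1 \<and> bj = 1) \<or> (bi = 2 \<and> bj = 2) then A x y > 0
          else if bi = 3 \<and> bj = 4 then A x y \<ge> 0 \<and> A y x = A x y
          else if bi = 4 \<and> bj = 3 then A x y \<ge> 0
          else A x y = 0"
proof -
  let ?F = "fpart n A p0"
  have Z: "?F u = 0 \<Longrightarrow> v<n \<Longrightarrow> A u v = 0" for u v
    unfolding fpart_def by (auto split: if_splits)
  have Zs: "?F u = 0 \<Longrightarrow> u<n \<Longrightarrow> v<n \<Longrightarrow> A v u = 0" for u v
    using Z symm by metis
  have P: "?F u = 1 \<or> ?F u = 2 \<Longrightarrow> A u u > 0" for u
    unfolding fpart_def by (auto split: if_splits)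
  have Q: "?F u = 3 \<or> ?F u = 4 \<Longrightarrow> u < n \<Longrightarrow> isQ u" for u
    unfolding fpart_def isQ_def using nn[of u u] by (auto split: if_splits)
  have P1: "?F u = 1 \<longleftrightarrow> A u u > 0 \<and> A u p0 > 0 \<and> \<not>(\<forall>j<n. A u j = 0)" for u
    unfolding fpart_def by (auto split: if_splits)
  have P2: "?F u = 2 \<longleftrightarrow> A u u > 0 \<and> \<not> A u p0 > 0 \<and> \<not>(\<forall>j<n. A u j = 0)" for u
    unfolding fpart_def by (auto split: if_splits)
  have Q3c: "?F u = 3 \<longleftrightarrow> \<not> A u u > 0 \<and> Q3 n A u \<and> \<not>(\<forall>j<n. A u j = 0)" for u
    unfolding fpart_def by (auto split: if_splits)
  have Q4c: "?F u = 4 \<longleftrightarrow> \<not> A u u > 0 \<and> \<not> Q3 n A u \<and> \<not>(\<forall>j<n. A u j = 0)" for u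
    unfolding fpart_def by (auto split: if_splits)
  have rng: "?F u \<in> {0,1,2,3,4}" for u unfolding fpart_def by auto
  have PQ: "A u v = 0" if "?F u = 1 \<or> ?F u = 2" "?F v = 3 \<or> ?F v = 4" "u<n" "v<n" for u v
    using F1[OF that(3,4) P[OF that(1)]] Q[OF that(2,4)] unfolding isQ_def by auto
  have QP: "A u v = 0" if "?F v = 1 \<or> ?F v = 2" "?F u = 3 \<or> ?F u = 4" "u<n" "v<n" for u v
    using PQ[OF that(1,2,4,3)] symm that(3,4) by metis
  have p0P: "p0 < n \<and> A p0 p0 > 0" if "?F u = 1 \<or> ?F u = 2" "u<n" for u
    using p0 P[OF that(1)] that(2) by blast
  have B11: "A u v > 0" if "?F u = 1" "?F v = 1" "u<n" "v<n" for u v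
  proof -
    have pp: "p0<n" "A p0 p0 > 0" using p0P that by auto
    have "A p0 v > 0" using symm[OF that(4) pp(1)] that(2) P1 by simp
    thus ?thesis using F2trans[OF that(3) pp(1) that(4)] that P1 pp by simp
  qed
  have B22: "A u v > 0" if "?F u = 2" "?F v = 2" "u<n" "v<n" for u v
  proof (rule ccontr)
    assume "\<not> A u v > 0"
    hence uv: "A u v = 0" using nn that by force
    have pp: "p0<n" "A p0 p0 > 0" using p0P that by auto
    have "A u p0 = 0" "A v p0 = 0" using that P2 nn pp(1) by force+
    thus False using F2three[OF that(3,4) pp(1) _ _ pp(2) uv] P2 that by simp
  qed
  have B12: "A u v = 0" if "?F u = 1" "?F v = 2" "u<n" "v<n" for u v
  proof (rule ccontr)
    assume "A u v \<noteq> 0"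
    hence uv: "A v u > 0" using nn symm that by force
    have pp: "p0<n" "A p0 p0 > 0" using p0P that by auto
    have "A v p0 > 0" using F2trans[OF that(4,3) pp(1)] uv P1 P2 that pp by simp
    thus False using P2 that by simp
  qed
  have B21: "A u v = 0" if "?F u = 2" "?F v = 1" "u<n" "v<n" for u v
    using B12[OF that(2,1,4,3)] symm that by metis
  have B33: "A u v = 0" if "?F u = ?F v" "?F u = 3 \<or> ?F u = 4" "u<n" "v<n" for u v
  proof (rule ccontr)
    assume "A u v \<noteq> 0"
    hence uv: "A u v > 0" using nn that by force
    have x1: "Q3 n A u \<longleftrightarrow> \<not> Q3 n A v" using Q3xor[OF Q[OF that(2,3)] that(4) uv] .
    have x2: "Q3 n A u \<longleftrightarrow> Q3 n A v"
    proof (cases "?F u = 3")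
      case True
      then have "?F v = 3" using that(1) by simp
      then show ?thesis using True Q3c[of u] Q3c[of v] by simp
    next
      case False
      then have "?F u = 4" "?F v = 4" using that(1,2) by auto
      then show ?thesis using Q4c[of u] Q4c[of v] by simp
    qed
    show False using x1 x2 by simp
  qed
  have nxy: "A x y \<ge> 0" using nn x y by simp
  have sxy: "A y x = A x y" using symm x y by simp
  let ?a = "?F x" and ?b = "?F y"
  have ra: "?a = 0 \<or> ?a = 1 \<or> ?a = 2 \<or> ?a = 3 \<or> ?a = 4" using rng[of x] by simp
  have rb: "?b = 0 \<or> ?b = 1 \<or> ?b = 2 \<or> ?b = 3 \<or> ?b = 4" using rng[of y] by simp
  show ?thesis
  proof (cases "(?a = 1 \<and> ?b = 1) \<or> (?a = 2 \<and> ?b = 2)")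
    case True
    thus ?thesis unfolding Let_def using B11[OF _ _ x y] B22[OF _ _ x y] by auto
  next
    case c1: False
    show ?thesis
    proof (cases "?a = 3 \<and> ?b = 4")
      case True
      thus ?thesis unfolding Let_def using c1 nxy sxy by simp
    next
      case c2: False
      show ?thesis
      proof (cases "?a = 4 \<and> ?b = 3")
        case True
        thus ?thesis unfolding Let_def using c1 nxy by simp
      next
        case c3: False
        have "?a = 0 \<or> ?b = 0 \<or> ((?a = 1 \<or> ?a = 2) \<and> (?b = 3 \<or> ?b = 4))
          \<or> ((?b = 1 \<or> ?b = 2) \<and> (?a = 3 \<or> ?a = 4)) \<or> (?a = 1 \<and> ?b = 2) \<or> (?a = 2 \<and> ?b = 1)
          \<or> (?a = ?b \<and> (?a = 3 \<or> ?a = 4))"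
          using combo[of ?a ?b] rng[of x] rng[of y] c1 c2 c3 by blast
        hence "A x y = 0"
        proof (elim disjE)
          assume "?a = 0" thus ?thesis using Z[OF _ y] by simp
        next
          assume "?b = 0" thus ?thesis using Zs[OF _ y x] by simp
        next
          assume "(?a = 1 \<or> ?a = 2) \<and> (?b = 3 \<or> ?b = 4)" thus ?thesis using PQ[OF _ _ x y] by blast
        next
          assume "(?b = 1 \<or> ?b = 2) \<and> (?a = 3 \<or> ?a = 4)" thus ?thesis using QP[OF _ _ x y] by blast
        next
          assume "?a = 1 \<and> ?b = 2" thus ?thesis using B12[OF _ _ x y] by blast
        next
          assume "?a = 2 \<and> ?b = 1" thus ?thesis using B21[OF _ _ x y] by blast
        next
          assume "?a = ?b \<and> (?a = 3 \<or> ?a = 4)" thus ?thesis using B33[OF _ _ x y] by blast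
        qed
        thus ?thesis unfolding Let_def using c1 c2 c3 by auto
      qed
    qed
  qed
qed

lemma nb3:
  assumes "fpart n A p0 y = 4" "y<n"
  shows "\<exists>x<n. fpart n A p0 x = 3 \<and> A x y \<noteq> 0"
proof -
  have q: "isQ y" using assms unfolding fpart_def isQ_def using nn[of y y] by (auto split: if_splits)
  have nq: "\<not> Q3 n A y" using assms unfolding fpart_def by (auto split: if_splits)
  obtain x where x: "x<n" "A y x \<noteq> 0" using q unfolding isQ_def by blast
  have yx: "A y x > 0" using x nn[of y x] assms(2) by simp
  have qx: "isQ x" using Qnb[OF q x(1) yx] .
  have "Q3 n A x" using Q3xor[OF q x(1) yx] nq by simp
  hence "fpart n A p0 x = 3" using qx unfolding fpart_def isQ_def by auto
  moreover have "A x y \<noteq> 0" using symm[OF x(1) assms(2)] x(2) by simp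
  ultimately show ?thesis using x(1) by blast
qed

end


lemma perm_exists:
  fixes f :: "nat \<Rightarrow> nat"
  assumes rng: "\<forall>x<n. f x \<le> 4"
  shows "\<exists>\<sigma> k0 k1 k2 k3 k4. bij_betw \<sigma> {..<n} {..<n} \<and> k0+k1+k2+k3+k4 = n \<and>
           (\<forall>i<n. blk k0 k1 k2 k3 i = f (\<sigma> i))"
proof -
  define l where "l t = sorted_list_of_set {x. x<n \<and> f x = t}" for t
  define L where "L = l 0 @ l 1 @ l 2 @ l 3 @ l 4"
  have sl: "set (l t) = {x. x<n \<and> f x = t}" "distinct (l t)" for t
    unfolding l_def by auto
  have dL: "distinct L" unfolding L_def using sl by auto
  have sL: "set L = {..<n}" unfolding L_def using sl rng by force
  have len: "length L = n" using distinct_card[OF dL] sL by simp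
  have bij: "bij_betw ((!) L) {..<n} {..<n}" by (rule bij_betw_nth) (use dL sL len in auto)
  define k where "k t = length (l t)" for t
  have mem: "\<And>t j. j < k t \<Longrightarrow> f (l t ! j) = t"
    unfolding k_def using sl nth_mem by blast
  have sum: "k 0 + k 1 + k 2 + k 3 + k 4 = n" using len unfolding L_def k_def by simp
  have blkeq: "blk (k 0) (k 1) (k 2) (k 3) i = f (L ! i)" if i: "i<n" for i
  proof -
    have "i < k 0 + k 1 + k 2 + k 3 + k 4" using i sum by simp
    thus ?thesis unfolding blk_def L_def using mem
      by (auto simp: nth_append k_def[symmetric] algebra_simps)
  qed
  show ?thesis using bij sum blkeq by blast
qed

lemma rank_attained:
  "\<exists>I J. I \<subseteq> {..<n} \<and> J \<subseteq> {..<n} \<and> card I = sym_trop_rank n A \<and> card J = sym_trop_rank n A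
     \<and> \<not> sym_trop_singular A I J"
proof -
  let ?P = "\<lambda>r. \<exists>I J. I \<subseteq> {..<n} \<and> J \<subseteq> {..<n} \<and> card I = r \<and> card J = r \<and> \<not> sym_trop_singular A I J"
  have "\<not> sym_trop_singular A {} {}" unfolding sym_trop_singular_def monomial_def by simp
  hence "?P 0" by force
  moreover have "\<forall>y. ?P y \<longrightarrow> y \<le> n"
    by (metis card_lessThan card_mono finite_lessThan)
  ultimately have "?P (Greatest ?P)" using GreatestI_nat[of ?P 0 n] by blast
  thus ?thesis unfolding sym_trop_rank_def .
qed

lemma zero_sing2:
  fixes A :: "nat \<Rightarrow> nat \<Rightarrow> real"
  assumes I: "I \<subseteq> {..<n}" and J: "J \<subseteq> {..<n}" and cI: "card I = 2" and cJ: "card J = 2"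
    and z: "\<forall>i<n. \<forall>j<n. A i j = 0"
  shows "sym_trop_singular A I J"
proof -
  obtain a b where ab: "I = {a,b}" "a \<noteq> b" using cI card_2_iff by metis
  obtain c d where cd: "J = {c,d}" "c \<noteq> d" using cJ card_2_iff by metis
  let ?r1 = "\<lambda>x. if x = a then c else if x = b then d else undefined"
  let ?r2 = "\<lambda>x. if x = a then d else if x = b then c else undefined"
  have r1: "?r1 \<in> bijs I J" using ab cd unfolding bijs_def bij_betw_def inj_on_def by (auto split: if_splits)
  have r2: "?r2 \<in> bijs I J" using ab cd unfolding bijs_def bij_betw_def inj_on_def by (auto split: if_splits)
  have v: "mon_value A I \<tau> = 0" if "\<tau> \<in> bijs I J" for \<tau>
  proof -
    have "\<forall>i\<in>I. \<tau> i \<in> J" using that unfolding bijs_def by auto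
    hence "\<forall>i\<in>I. A i (\<tau> i) = 0" using z I J by blast
    thus ?thesis unfolding mon_value_def by simp
  qed
  have m1: "monomial I ?r1 = {#{a,c},{b,d}#}" using ab by (simp add: monomial_def)
  have m2: "monomial I ?r2 = {#{a,d},{b,c}#}" using ab by (simp add: monomial_def)
  have ne: "monomial I ?r1 \<noteq> monomial I ?r2"
  proof
    assume eq: "monomial I ?r1 = monomial I ?r2"
    have ne1: "{a,c} \<noteq> {a,d}" using cd by (auto simp: doubleton_eq_iff)
    have ne2: "{a,c} \<noteq> {b,c}" using ab by (auto simp: doubleton_eq_iff)
    have "{a,c} \<notin># {#{a,d},{b,c}#}" using ne1 ne2 by simp
    moreover have "{a,c} \<in># {#{a,c},{b,d}#}" by simp
    ultimately show False using m1 m2 eq by metis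
  qed
  show ?thesis unfolding sym_trop_singular_def using r1 r2 v ne by (intro bexI[of _ ?r1] bexI[of _ ?r2]) auto
qed

theorem lemma4:
  fixes n :: nat and A :: "nat \<Rightarrow> nat \<Rightarrow> real"
  assumes symm: "\<forall>i<n. \<forall>j<n. A i j = A j i"
    and row_min: "\<forall>i<n. (\<forall>j<n. A i j \<ge> 0) \<and> (\<exists>j<n. A i j = 0)"
    and col_min: "\<forall>j<n. (\<forall>i<n. A i j \<ge> 0) \<and> (\<exists>i<n. A i j = 0)"
    and rank2: "sym_trop_rank n A = 2"
  shows "(\<exists>\<sigma> k0 k1 k2 k3 k4. bij_betw \<sigma> {..<n} {..<n} \<and>
            sym_block_form n (\<lambda>i j. A (\<sigma> i) (\<sigma> j)) k0 k1 k2 k3 k4)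
         \<and> (\<exists>i<n. \<exists>j<n. A i j \<noteq> 0)
         \<and> \<not> (\<forall>i<n. \<forall>j<n. A i j > 0)"
proof -
  have sing3: "sym_trop_singular A I J"
    if "I \<subseteq> {..<n}" "J \<subseteq> {..<n}" "card I = 3" "card J = 3" for I J
    using rank_ge3[OF that] rank2 by force
  interpret R2 n A using symm row_min sing3 by unfold_locales auto
  obtain I2 J2 where IJ2: "I2 \<subseteq> {..<n}" "J2 \<subseteq> {..<n}" "card I2 = 2" "card J2 = 2"
    "\<not> sym_trop_singular A I2 J2" using rank_attained[of n A] rank2 by auto
  have n2: "2 \<le> n" using card_mono[OF _ IJ2(1)] IJ2(3) by simp
  have c2: "\<exists>i<n. \<exists>j<n. A i j \<noteq> 0" using zero_sing2[OF IJ2(1-4)] IJ2(5) by blast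
  have c3: "\<not> (\<forall>i<n. \<forall>j<n. A i j > 0)" using row_min n2 by force
  obtain p0 where p0: "(\<exists>p<n. A p p > 0) \<longrightarrow> p0 < n \<and> A p0 p0 > 0" by blast
  let ?F = "fpart n A p0"
  have rng: "\<forall>x<n. ?F x \<le> 4" unfolding fpart_def by auto
  obtain \<sigma> k0 k1 k2 k3 k4 where bij: "bij_betw \<sigma> {..<n} {..<n}" and sum: "k0+k1+k2+k3+k4 = n"
    and bk: "\<forall>i<n. blk k0 k1 k2 k3 i = ?F (\<sigma> i)"
    using perm_exists[OF rng] by blast
  have sl: "\<sigma> i < n" if "i<n" for i using bij_betw_apply[OF bij] that by auto
  have "sym_block_form n (\<lambda>i j. A (\<sigma> i) (\<sigma> j)) k0 k1 k2 k3 k4"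
    unfolding sym_block_form_def
  proof (intro conjI allI impI)
    show "k0+k1+k2+k3+k4 = n" by fact
  next
    fix i j assume i: "i<n" and j: "j<n"
    show "let bi = blk k0 k1 k2 k3 i; bj = blk k0 k1 k2 k3 j
          in if bi = 1 \<and> bj = 1 \<or> bi = 2 \<and> bj = 2 then 0 < A (\<sigma> i) (\<sigma> j)
             else if bi = 3 \<and> bj = 4 then 0 \<le> A (\<sigma> i) (\<sigma> j) \<and> A (\<sigma> j) (\<sigma> i) = A (\<sigma> i) (\<sigma> j)
                  else if bi = 4 \<and> bj = 3 then 0 \<le> A (\<sigma> i) (\<sigma> j) else A (\<sigma> i) (\<sigma> j) = 0"
      using blockprop[OF p0 sl[OF i] sl[OF j]] bk i j by simp
  next
    fix j assume j: "k0 + k1 + k2 + k3 \<le> j \<and> j < n"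
    have "blk k0 k1 k2 k3 j = 4" using j unfolding blk_def by auto
    hence "?F (\<sigma> j) = 4" using bk j by simp
    then obtain x where x: "x<n" "?F x = 3" "A x (\<sigma> j) \<noteq> 0" using nb3 sl j by blast
    have "x \<in> \<sigma> ` {..<n}" using bij x(1) unfolding bij_betw_def by auto
    then obtain i where i: "i<n" "\<sigma> i = x" by auto
    have "blk k0 k1 k2 k3 i = 3" using bk i x by simp
    hence "k0 + k1 + k2 \<le> i \<and> i < k0 + k1 + k2 + k3" unfolding blk_def by (auto split: if_splits)
    thus "\<exists>i. k0 + k1 + k2 \<le> i \<and> i < k0 + k1 + k2 + k3 \<and> A (\<sigma> i) (\<sigma> j) \<noteq> 0" using i x by blast
  qed
  thus ?thesis using bij c2 c3 by blast
qed

end
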